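(* Consider a canonical noiseless MMV model $B=AX$ in which $A$ satisfies $0\le\delta^L_{2k-r+1}(A)<1$ and the nonzero rows of $X$ are in general position. Let $I_{k-r}\subset\operatorname{supp}X$ with $|I_{k-r}|=k-r$. Then for any $j\in\{1,\dots,n\}\setminus I_{k-r}$, the following are equivalent: (a) $j\in\operatorname{supp}X$; (b) $\operatorname{rank}[A_{I_{k-r}\cup\{j\}}~B]<k+1$; (c) $\mathbf a_j^{*}P^{\perp}_{R([A_{I_{k-r}}~B])}\mathbf a_j=0$.
   Context: Canonical MMV setting: $m,n,r,k$ are positive integers with $r\le m<n$ and $r\le k$. $A\in\mathbb{R}^{m\times n}$ is the sensing matrix with columns $\mathbf a_1,\dots,\mathbf a_n$; $X\in\mathbb{R}^{n\times r}$ has rows $\mathbf x^1,\dots,\mathbf x^n$, $\operatorname{supp}X=\{i:\mathbf x^i\neq 0\}$ and $|\operatorname{supp}X|=k$; $B=AX\in\mathbb{R}^{m\times r}$ has full column rank $r$. For an index set $I$, $A_I$ is the submatrix of $A$ formed by the columns indexed by $I$, and $[A_I~B]$ denotes horizontal concatenation. $R(M)$ is the column space of $M$, $P_{R(M)}$ the orthogonal projection onto it, and $P^\perp_{R(M)}=\mathrm{Id}-P_{R(M)}$; $^*$ denotes transpose. The lower restricted isometry constant $\delta^L_s(A)$ is the smallest $\delta\ge0$ such that $(1-\delta)\|\mathbf x\|_2^2\le\|A\mathbf x\|_2^2$ for all $\mathbf x$ with at most $s$ nonzero entries. "The nonzero rows of $X$ are in general position" means any $r$ of the $k$ nonzero rows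 of $X$ are linearly independent. *)

theory Defs
  imports "HOL-Analysis.Analysis"
begin

definition row_supp :: "real^'r^'n \<Rightarrow> 'n set" where
  "row_supp X = {i. X $ i \<noteq> 0}"

text \<open>Set of columns of the concatenation [A_J B]; its span is R([A_J B]) and
  its dimension is rank [A_J B] (column rank).\<close>
definition concat_cols :: "real^'n^'m \<Rightarrow> 'n set \<Rightarrow> real^'r^'m \<Rightarrow> (real^'m) set" where
  "concat_cols A J B = (\<lambda>i. column i A) ` J \<union> columns B"

definition rank_concat :: "real^'n^'m \<Rightarrow> 'n set \<Rightarrow> real^'r^'m \<Rightarrow> nat" where
  "rank_concat A J B = dim (concat_cols A J B)"

definition orth_proj :: "(real^'m) set \<Rightarrow> real^'m \<Rightarrow> real^'m" where
  "orth_proj S x = (THE p. p \<in> S \<and> (\<forall>y\<in>S. inner (x - p) y = 0))"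

definition orth_proj_perp :: "(real^'m) set \<Rightarrow> real^'m \<Rightarrow> real^'m" where
  "orth_proj_perp S x = x - orth_proj S x"

definition lower_ric :: "nat \<Rightarrow> real^'n^'m \<Rightarrow> real" where
  "lower_ric s A = Inf {\<delta>. \<delta> \<ge> 0 \<and> (\<forall>x::real^'n. card {i. x $ i \<noteq> 0} \<le> s \<longrightarrow>
        (1 - \<delta>) * (norm x)\<^sup>2 \<le> (norm (A *v x))\<^sup>2)}"

definition rows_general_position :: "real^'r^'n \<Rightarrow> bool" where
  "rows_general_position X \<longleftrightarrow>
     (\<forall>S \<subseteq> row_supp X. card S = CARD('r) \<longrightarrow>
        inj_on (\<lambda>i. X $ i) S \<and> independent ((\<lambda>i. X $ i) ` S))"

end

theory Submission imports Defs begin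

lemma orth_proj_char:
  fixes V :: "(real^'m) set"
  shows "orth_proj (span V) x \<in> span V \<and> (\<forall>y\<in>span V. inner (x - orth_proj (span V) x) y = 0)"
proof -
  obtain p z where p: "p \<in> span V" and z: "\<And>w. w \<in> span V \<Longrightarrow> orthogonal z w" and xe: "x = p + z"
    using orthogonal_subspace_decomp_exists[of V x] by blast
  have P: "p \<in> span V \<and> (\<forall>y\<in>span V. inner (x - p) y = 0)"
    using p z xe by (simp add: orthogonal_def)
  have U: "q = p" if "q \<in> span V \<and> (\<forall>y\<in>span V. inner (x - q) y = 0)" for q
  proof -
    have d: "p - q \<in> span V" using that p by (simp add: span_diff)
    have "inner (x - q) (p - q) = 0" "inner (x - p) (p - q) = 0" using that P d by auto
    then have "inner (p - q) (p - q) = 0" by (simp add: inner_diff_left inner_diff_right)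
    then show ?thesis by simp
  qed
  have "orth_proj (span V) x = p"
    unfolding orth_proj_def using P U by (rule the_equality)
  then show ?thesis using P by simp
qed

lemma orth_perp_zero:
  fixes V :: "(real^'m) set"
  shows "inner a (orth_proj_perp (span V) a) = 0 \<longleftrightarrow> a \<in> span V"
proof -
  define P where "P = orth_proj (span V) a"
  have c: "P \<in> span V" "\<forall>y\<in>span V. inner (a - P) y = 0" using orth_proj_char[of V a] P_def by auto
  have "inner a (a - P) = inner (a - P) (a - P)"
    using c by (simp add: inner_diff_left inner_commute)
  then have e: "inner a (orth_proj_perp (span V) a) = 0 \<longleftrightarrow> a = P"
    by (simp add: orth_proj_perp_def P_def[symmetric])
  show ?thesis
  proof
    assume "a \<in> span V"
    have "a - P \<in> span V" using \<open>a \<in> span V\<close> c by (simp add: span_diff)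
    then have "inner (a - P) (a - P) = 0" using c by auto
    then show "inner a (orth_proj_perp (span V) a) = 0" using e by simp
  qed (use e c in auto)
qed

lemma dimr: "dim (UNIV :: (real^'r) set) = CARD('r)" by simp

lemma ric_ker:
  fixes A :: "real^'n^'m"
  assumes "lower_ric s A < 1" and "card {i. x $ i \<noteq> 0} \<le> s" and "A *v x = 0"
  shows "x = 0"
proof -
  let ?D = "{\<delta>. \<delta> \<ge> 0 \<and> (\<forall>x::real^'n. card {i. x $ i \<noteq> 0} \<le> s \<longrightarrow>
        (1 - \<delta>) * (norm x)\<^sup>2 \<le> (norm (A *v x))\<^sup>2)}"
  have ne: "?D \<noteq> {}" by (rule ccontr) (auto dest: spec[of _ 1])
  have "1 \<in> ?D" by auto
  have bdd: "bdd_below ?D" by (rule bdd_belowI[of _ 0]) auto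
  obtain d where "d \<in> ?D" "d < 1" using assms(1) unfolding lower_ric_def
    using cInf_less_iff[OF _ bdd] \<open>1 \<in> ?D\<close> by blast
  then have "(1 - d) * (norm x)\<^sup>2 \<le> 0" using assms by auto
  then have "(norm x)\<^sup>2 \<le> 0" using \<open>d < 1\<close> by (simp add: mult_le_0_iff)
  then show ?thesis by simp
qed

lemma main_inj:
  fixes A :: "real^'n^'m" and X :: "real^'r^'n" and B :: "real^'r^'m"
  assumes B: "B = A ** X" and ric: "lower_ric s A < 1"
   and gp: "rows_general_position X" and IS: "I \<subseteq> row_supp X"
   and cardSI: "card (row_supp X - I) = CARD('r)"
   and TS: "T \<inter> row_supp X \<subseteq> I" and cardST: "card (row_supp X \<union> T) \<le> s"
   and c0: "\<forall>i. i \<notin> T \<longrightarrow> c $ i = 0" and eq: "A *v c + B *v w = 0"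
  shows "c = 0 \<and> w = 0"
proof -
  define S where "S = row_supp X"
  define x where "x = c + X *v w"
  have Ax: "A *v x = 0" using eq B
    by (simp add: x_def matrix_vector_right_distrib matrix_vector_mul_assoc)
  have Xw: "(X *v w) $ i = inner (X $ i) w" for i
    by (simp add: matrix_vector_mult_def inner_vec_def)
  have sub: "{i. x $ i \<noteq> 0} \<subseteq> S \<union> T"
  proof
    fix i assume "i \<in> {i. x $ i \<noteq> 0}"
    moreover have "x $ i = 0" if "i \<notin> S" "i \<notin> T"
      using that c0 by (simp add: x_def Xw S_def row_supp_def)
    ultimately show "i \<in> S \<union> T" by blast
  qed
  have "card {i. x $ i \<noteq> 0} \<le> s"
    using card_mono[OF _ sub] cardST S_def by force
  then have x0: "x = 0" using ric_ker[OF ric _ Ax] by blast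
  have orth: "inner (X $ i) w = 0" if "i \<in> S - I" for i
  proof -
    have "i \<notin> T" using that TS S_def by blast
    then have "c $ i = 0" using c0 by blast
    then show ?thesis using x0 by (metis Xw add.left_neutral vec_lambda_beta x_def vector_add_component zero_index)
  qed
  define R where "R = (\<lambda>i. X $ i) ` (S - I)"
  have "inj_on (\<lambda>i. X $ i) (S - I) \<and> independent R"
    using gp cardSI unfolding rows_general_position_def R_def S_def by blast
  then have indR: "independent R" and cR: "card R = CARD('r)"
    using cardSI card_image[of "\<lambda>i. X $ i" "S - I"] unfolding R_def S_def by auto
  have "UNIV \<subseteq> span R"
    by (rule card_ge_dim_independent) (use indR cR in auto)
  then have "w \<in> span R" by blast
  moreover have "\<And>y. y \<in> R \<Longrightarrow> orthogonal w y"
    using orth unfolding R_def orthogonal_def by (auto simp: inner_commute)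
  ultimately have "orthogonal w w" by (rule orthogonal_to_span)
  then have w0: "w = 0" by (simp add: orthogonal_def)
  then have "c = 0" using x0 by (simp add: x_def)
  then show ?thesis using w0 by simp
qed

lemma main_indep:
  fixes A :: "real^'n^'m" and X :: "real^'r^'n" and B :: "real^'r^'m"
  assumes B: "B = A ** X" and ric: "lower_ric s A < 1"
   and gp: "rows_general_position X" and IS: "I \<subseteq> row_supp X"
   and cardSI: "card (row_supp X - I) = CARD('r)"
   and TS: "T \<inter> row_supp X \<subseteq> I" and cardST: "card (row_supp X \<union> T) \<le> s"
  shows "independent (concat_cols A T B) \<and> card (concat_cols A T B) = card T + CARD('r)"
proof -
  note M = main_inj[OF B ric gp IS cardSI TS cardST]
  define f where "f = (\<lambda>i. column i A)"
  define g where "g = (\<lambda>l. column l B)"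
  have Af: "A *v axis i 1 = f i" for i by (simp add: f_def matrix_vector_mult_basis)
  have Bg: "B *v axis l 1 = g l" for l by (simp add: g_def matrix_vector_mult_basis)
  have ax: "axis i (1::real) \<noteq> 0" for i :: 'n by (simp add: axis_eq_0_iff)
  have axr: "axis i (1::real) \<noteq> 0" for i :: 'r by (simp add: axis_eq_0_iff)
  have injf: "inj_on f T"
  proof (rule inj_onI, rule ccontr)
    fix i i' assume "i \<in> T" "i' \<in> T" "f i = f i'" "i \<noteq> i'"
    define c where "c = axis i (1::real) - axis i' 1"
    have "\<forall>t. t \<notin> T \<longrightarrow> c $ t = 0" using \<open>i \<in> T\<close> \<open>i' \<in> T\<close> by (auto simp: c_def axis_def)
    moreover have "A *v c + B *v 0 = 0" using \<open>f i = f i'\<close>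
      by (simp add: c_def matrix_vector_mult_diff_distrib Af)
    ultimately have "c = 0" using M by blast
    then have "c $ i = 0" by simp
    then show False using \<open>i \<noteq> i'\<close> by (simp add: c_def axis_def)
  qed
  have injg: "inj g"
  proof (rule injI, rule ccontr)
    fix l l' assume "g l = g l'" "l \<noteq> l'"
    define w where "w = axis l (1::real) - axis l' 1"
    have "A *v 0 + B *v w = 0" using \<open>g l = g l'\<close>
      by (simp add: w_def matrix_vector_mult_diff_distrib Bg)
    moreover have "\<forall>t. t \<notin> T \<longrightarrow> (0::real^'n) $ t = 0" by simp
    ultimately have "w = 0" using M by blast
    then have "w $ l = 0" by simp
    then show False using \<open>l \<noteq> l'\<close> by (simp add: w_def axis_def)
  qed
  have disj: "f ` T \<inter> range g = {}"
  proof (rule ccontr)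
    assume "f ` T \<inter> range g \<noteq> {}"
    then obtain i l where "i \<in> T" "f i = g l" by auto
    have neg: "B *v (- axis l 1) = - g l"
      using matrix_vector_mult_diff_distrib[of B 0 "axis l 1"] by (simp add: Bg)
    have "\<forall>t. t \<notin> T \<longrightarrow> axis i (1::real) $ t = 0" using \<open>i \<in> T\<close> by (auto simp: axis_def)
    moreover have "A *v axis i 1 + B *v (- axis l 1) = 0" using \<open>f i = g l\<close>
      by (simp add: Af neg)
    ultimately have "axis i (1::real) = 0" using M by blast
    then show False using ax by blast
  qed
  have V: "concat_cols A T B = f ` T \<union> range g"
    by (auto simp: concat_cols_def columns_def f_def g_def)
  have card: "card (concat_cols A T B) = card T + CARD('r)"
    unfolding V by (simp add: card_Un_disjoint disj card_image injf injg)
  have "\<not> dependent (f ` T \<union> range g)"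
  proof
    assume "dependent (f ` T \<union> range g)"
    then obtain u where u: "\<exists>v\<in>f ` T \<union> range g. u v \<noteq> 0"
      and s: "(\<Sum>v\<in>f ` T \<union> range g. u v *\<^sub>R v) = 0"
      using dependent_finite[of "f ` T \<union> range g"] by auto
    define c where "c = (\<chi> i. if i \<in> T then u (f i) else 0)"
    define w where "w = (\<chi> l. u (g l))"
    have "(\<Sum>v\<in>f ` T \<union> range g. u v *\<^sub>R v) = (\<Sum>i\<in>T. u (f i) *\<^sub>R f i) + (\<Sum>l\<in>UNIV. u (g l) *\<^sub>R g l)"
      by (simp add: sum.union_disjoint disj sum.reindex injf injg)
    also have "(\<Sum>i\<in>T. u (f i) *\<^sub>R f i) = A *v c"
    proof -
      have "A *v c = (\<Sum>i\<in>UNIV. (if i \<in> T then u (f i) *\<^sub>R f i else 0))"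
        unfolding matrix_mult_sum c_def f_def scalar_mult_eq_scaleR by (rule sum.cong) auto
      also have "\<dots> = (\<Sum>i\<in>UNIV \<inter> T. u (f i) *\<^sub>R f i)"
        by (rule sum.inter_restrict[symmetric]) simp
      finally show ?thesis by (metis Int_UNIV_left)
    qed
    also have "(\<Sum>l\<in>UNIV. u (g l) *\<^sub>R g l) = B *v w"
      by (simp add: matrix_mult_sum w_def g_def scalar_mult_eq_scaleR)
    finally have "A *v c + B *v w = 0" using s by simp
    moreover have "\<forall>t. t \<notin> T \<longrightarrow> c $ t = 0" by (simp add: c_def)
    ultimately have "c = 0 \<and> w = 0" using M by blast
    have "u (f i) = 0" if "i \<in> T" for i
    proof -
      have "c $ i = 0" using \<open>c = 0 \<and> w = 0\<close> by simp
      then show ?thesis using that by (simp add: c_def)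
    qed
    moreover have "u (g l) = 0" for l
    proof -
      have "w $ l = 0" using \<open>c = 0 \<and> w = 0\<close> by simp
      then show ?thesis by (simp add: w_def)
    qed
    ultimately show False using u by auto
  qed
  then show ?thesis using V card by simp
qed

theorem corollary1:
  fixes A :: "real^'n^'m" and X :: "real^'r^'n" and B :: "real^'r^'m"
    and k :: nat and I :: "'n set" and j :: 'n
  assumes "CARD('r) \<le> CARD('m)" and "CARD('m) < CARD('n)" and "CARD('r) \<le> k"
    and "card (row_supp X) = k"
    and "B = A ** X"
    and "rank B = CARD('r)"
    and "0 \<le> lower_ric (2 * k - CARD('r) + 1) A" and "lower_ric (2 * k - CARD('r) + 1) A < 1"
    and "rows_general_position X"
    and "I \<subseteq> row_supp X" and "card I = k - CARD('r)"
    and "j \<notin> I"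
  shows "(j \<in> row_supp X \<longleftrightarrow> rank_concat A (I \<union> {j}) B < k + 1)
       \<and> (rank_concat A (I \<union> {j}) B < k + 1 \<longleftrightarrow>
            inner (column j A) (orth_proj_perp (span (concat_cols A I B)) (column j A)) = 0)"
proof -
  define S where "S = row_supp X"
  define s where "s = 2 * k - CARD('r) + 1"
  define C where "C = concat_cols A I B"
  have rk: "CARD('r) \<le> k" and cS: "card S = k" and IS: "I \<subseteq> S"
    using assms S_def by auto
  have finS: "finite S" by simp
  have cSI: "card (S - I) = CARD('r)"
    using card_Diff_subset[of I S] IS finS assms(11) cS rk
    by (metis diff_diff_cancel finite_subset)
  note MI = main_indep[OF assms(5) assms(8) assms(9) assms(10) cSI[unfolded S_def]]
  have "independent C \<and> card C = card I + CARD('r)"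
    unfolding C_def
  proof (rule MI)
    have "row_supp X \<union> I = S" using IS S_def by auto
    then show "card (row_supp X \<union> I) \<le> 2 * k - CARD('r) + 1" using cS rk by simp
  qed auto
  then have indC: "independent C" and cC: "card C = k"
    using assms(11) rk by auto
  have dC: "dim C = k" using dim_eq_card_independent[OF indC] cC by simp
  have ins: "concat_cols A (I \<union> {j}) B = insert (column j A) C"
    by (auto simp: C_def concat_cols_def)
  have key: "(j \<in> S \<longleftrightarrow> rank_concat A (I \<union> {j}) B < k + 1) \<and> (j \<in> S \<longleftrightarrow> column j A \<in> span C)"
  proof (cases "j \<in> S")
    case False
    have c1: "card (row_supp X \<union> (I \<union> {j})) \<le> 2 * k - CARD('r) + 1"
    proof -
      have "row_supp X \<union> (I \<union> {j}) = insert j S" using IS S_def by auto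
      then show ?thesis using False cS rk by simp
    qed
    have "independent (concat_cols A (I \<union> {j}) B) \<and>
          card (concat_cols A (I \<union> {j}) B) = card (I \<union> {j}) + CARD('r)"
      by (rule MI) (use False S_def c1 s_def in auto)
    moreover have "card (I \<union> {j}) = k - CARD('r) + 1"
      using assms(11) assms(12) by (simp add: card_insert_if)
    ultimately have ind2: "independent (insert (column j A) C)"
      and c2: "card (insert (column j A) C) = k + 1"
      using rk ins by auto
    have "rank_concat A (I \<union> {j}) B = k + 1"
      unfolding rank_concat_def using dim_eq_card_independent[OF ind2] c2 ins by simp
    moreover have "column j A \<notin> C" using c2 cC by (metis insert_absorb n_not_Suc_n Suc_eq_plus1)
    then have "column j A \<notin> span C" using ind2 independent_insert by metis
    ultimately show ?thesis using False by simp
  next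
    case True
    define W where "W = (\<lambda>i. column i A) ` S"
    have colB: "column l B \<in> span W" for l
    proof -
      have "column l B = A *v (X *v axis l 1)"
        using assms(5) by (metis matrix_vector_mul_assoc matrix_vector_mult_basis)
      also have "\<dots> = (\<Sum>i\<in>UNIV. (X *v axis l 1) $ i *s column i A)"
        by (rule matrix_mult_sum)
      also have "\<dots> \<in> span W"
      proof (rule span_sum)
        fix i :: 'n
        show "(X *v axis l 1) $ i *s column i A \<in> span W"
        proof (cases "i \<in> S")
          case True
          then show ?thesis unfolding scalar_mult_eq_scaleR
            by (intro span_mul span_base) (simp add: W_def)
        next
          case False
          then have "X $ i = 0" by (simp add: S_def row_supp_def)
          then have "(X *v axis l 1) $ i = 0" by (simp add: matrix_vector_mult_def)
          then show ?thesis by (simp add: span_zero)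
        qed
      qed
      finally show ?thesis .
    qed
    have sub2: "concat_cols A (I \<union> {j}) B \<subseteq> span W"
      using colB IS True by (auto simp: concat_cols_def columns_def W_def intro: span_base)
    have cW: "card W \<le> k" unfolding W_def using card_image_le[OF finS] cS by metis
    have "rank_concat A (I \<union> {j}) B \<le> k"
      unfolding rank_concat_def using dim_le_card[OF sub2] cW by (simp add: W_def)
    moreover have "column j A \<in> span C"
    proof -
      have "C \<subseteq> span W" using sub2 ins by auto
      then have sCW: "span C \<subseteq> span W" by (simp add: span_minimal)
      have "dim (span W) \<le> dim (span C)"
        using dim_le_card[of W W] cW dC finS by (simp add: span_superset W_def)
      then have "span C = span W"
        by (rule subspace_dim_equal[OF subspace_span subspace_span sCW])
      moreover have "column j A \<in> span W" using True by (auto simp: W_def intro: span_base)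
      ultimately show ?thesis by simp
    qed
    ultimately show ?thesis using True by simp
  qed
  show ?thesis using key orth_perp_zero[of "column j A" C] S_def C_def by auto
qed

end
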